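(* (1) For every $\varphi\in\mathcal{D}(\Omega)$ there exists a family $(\varphi_\varepsilon)_{\varepsilon>0}$ in $L^2_\sharp[Y,H^1(\Omega)]$ such that $\mathcal{F}_\varepsilon(\varphi_\varepsilon)=\varphi$ and $\mathcal{F}_\varepsilon(\nabla_x\varphi_\varepsilon)=\nabla_x\varphi$ for every $\varepsilon>0$; in particular $\varphi_\varepsilon\twoheadrightarrow\varphi$ strongly in $L^2_\sharp[Y,L^2(\Omega)]$ and $\nabla_x\varphi_\varepsilon\twoheadrightarrow\nabla_x\varphi$ strongly in $L^2_\sharp[Y,L^2(\Omega)]^N$. (2) For every $\psi\in\mathcal{D}(\Omega\times Y)$ (extended $Y$-periodically in $y$) there exists a family $(\psi_\varepsilon)_{\varepsilon>0}$ in $L^2_\sharp[Y,H^1(\Omega)]$ such that $\mathcal{F}_\varepsilon(\psi_\varepsilon)=\psi$ and $\varepsilon\mathcal{F}_\varepsilon(\nabla_x\psi_\varepsilon)=\nabla_y\psi+\varepsilon\nabla_x\psi$ for every $\varepsilon>0$; in particular $\psi_\varepsilon\twoheadrightarrow\psi$ strongly in $L^2_\sharp[Y,L^2(\Omega)]$ and $\varepsilon\nabla_x\psi_\varepsilon\twoheadrightarrow\nabla_y\psi$ strongly in $L^2_\sharp[Y,L^2(\Omega)]^N$.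
   Context: Let $N\ge1$, $Y=[0,1]^N$, $\Omega\subseteq\mathbb{R}^N$ open. $L^2_\sharp[Y,L^2(\Omega)]$ is the Hilbert space of measurable functions on $\Omega\times\mathbb{R}^N$, $\mathbb{Z}^N$-periodic in the second variable and square integrable on $\Omega\times Y$; $L^2_\sharp[Y,H^1(\Omega)]$ is the subspace of those $u$ with distributional $\nabla_x u\in L^2_\sharp[Y,L^2(\Omega)]^N$. Functions of $x$ alone are regarded as elements of these spaces constant in $y$. For $\varepsilon>0$, $\mathcal{F}_\varepsilon(u)(x,y):=u(x,y-x/\varepsilon)$. $u_\varepsilon\twoheadrightarrow u_0$ strongly means $\mathcal{F}_\varepsilon(u_\varepsilon)\to u_0$ strongly in $L^2_\sharp[Y,L^2(\Omega)]$ as $\varepsilon\to0$ (componentwise for vectors). *)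

theory Defs
  imports "HOL-Analysis.Analysis"
begin

fun Ck :: "nat \<Rightarrow> ('a::euclidean_space \<Rightarrow> real) \<Rightarrow> bool" where
  "Ck 0 f = continuous_on UNIV f"
| "Ck (Suc k) f = (f differentiable_on UNIV \<and>
      (\<forall>v. Ck k (\<lambda>x. frechet_derivative f (at x) v)))"

definition smooth_fun :: "('a::euclidean_space \<Rightarrow> real) \<Rightarrow> bool" where
  "smooth_fun f \<longleftrightarrow> (\<forall>k. Ck k f)"

definition tsupport :: "('a::euclidean_space \<Rightarrow> real) \<Rightarrow> 'a set" where
  "tsupport f = closure {x. f x \<noteq> 0}"

definition test_fun :: "'a::euclidean_space set \<Rightarrow> ('a \<Rightarrow> real) \<Rightarrow> bool" where
  "test_fun U f \<longleftrightarrow> smooth_fun f \<and> compact (tsupport f) \<and> tsupport f \<subseteq> U"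

definition grad :: "(real^'n \<Rightarrow> real) \<Rightarrow> real^'n \<Rightarrow> real^'n" where
  "grad f x = (\<chi> i. frechet_derivative f (at x) (axis i 1))"

definition grad_x :: "(real^'n \<Rightarrow> real^'n \<Rightarrow> real) \<Rightarrow> real^'n \<Rightarrow> real^'n \<Rightarrow> real^'n" where
  "grad_x u x y = grad (\<lambda>z. u z y) x"

definition grad_y :: "(real^'n \<Rightarrow> real^'n \<Rightarrow> real) \<Rightarrow> real^'n \<Rightarrow> real^'n \<Rightarrow> real^'n" where
  "grad_y u x y = grad (u x) y"

text \<open>Y-periodic extension (in the second variable) of a function given on Omega x Y.\<close>
definition per_ext :: "((real^'n) \<times> (real^'n) \<Rightarrow> real) \<Rightarrow> real^'n \<Rightarrow> real^'n \<Rightarrow> real" where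
  "per_ext g x y = g (x, \<chi> i. frac (y $ i))"

definition unitY :: "(real^'n) set" where
  "unitY = cbox 0 One"

definition periodic_y :: "(real^'n \<Rightarrow> real^'n \<Rightarrow> 'b) \<Rightarrow> bool" where
  "periodic_y u \<longleftrightarrow> (\<forall>x y k. (\<forall>i. k $ i \<in> \<int>) \<longrightarrow> u x (y + k) = u x y)"

definition L2sharp :: "(real^'n) set \<Rightarrow> (real^'n \<Rightarrow> real^'n \<Rightarrow> real) \<Rightarrow> bool" where
  "L2sharp \<Omega> u \<longleftrightarrow> periodic_y u
     \<and> (\<lambda>(x, y). u x y) \<in> borel_measurable (lebesgue_on (\<Omega> \<times> UNIV))
     \<and> integrable (lebesgue_on (\<Omega> \<times> unitY)) (\<lambda>(x, y). (u x y)\<^sup>2)"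

definition L2sharp_vec :: "(real^'n) set \<Rightarrow> (real^'n \<Rightarrow> real^'n \<Rightarrow> real^'n) \<Rightarrow> bool" where
  "L2sharp_vec \<Omega> G \<longleftrightarrow> (\<forall>i. L2sharp \<Omega> (\<lambda>x y. G x y $ i))"

definition has_weak_grad_x ::
  "(real^'n) set \<Rightarrow> (real^'n \<Rightarrow> real^'n \<Rightarrow> real) \<Rightarrow> (real^'n \<Rightarrow> real^'n \<Rightarrow> real^'n) \<Rightarrow> bool" where
  "has_weak_grad_x \<Omega> u G \<longleftrightarrow>
     (\<forall>\<theta>. test_fun (\<Omega> \<times> UNIV) \<theta> \<longrightarrow> (\<forall>i.
        integral\<^sup>L (lebesgue_on (\<Omega> \<times> UNIV))
          (\<lambda>(x, y). u x y * frechet_derivative \<theta> (at (x, y)) (axis i 1, 0))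
        = - integral\<^sup>L (lebesgue_on (\<Omega> \<times> UNIV)) (\<lambda>(x, y). G x y $ i * \<theta> (x, y))))"

definition L2sharp_H1 :: "(real^'n) set \<Rightarrow> (real^'n \<Rightarrow> real^'n \<Rightarrow> real) \<Rightarrow> bool" where
  "L2sharp_H1 \<Omega> u \<longleftrightarrow> L2sharp \<Omega> u \<and> (\<exists>G. L2sharp_vec \<Omega> G \<and> has_weak_grad_x \<Omega> u G)"

definition Feps :: "real \<Rightarrow> (real^'n \<Rightarrow> real^'n \<Rightarrow> 'b) \<Rightarrow> real^'n \<Rightarrow> real^'n \<Rightarrow> 'b" where
  "Feps \<epsilon> u x y = u x (y - (1 / \<epsilon>) *\<^sub>R x)"

definition L2norm :: "(real^'n) set \<Rightarrow> (real^'n \<Rightarrow> real^'n \<Rightarrow> real) \<Rightarrow> real" where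
  "L2norm \<Omega> w = sqrt (integral\<^sup>L (lebesgue_on (\<Omega> \<times> unitY)) (\<lambda>(x, y). (w x y)\<^sup>2))"

definition strong_2s :: "(real^'n) set \<Rightarrow> (real \<Rightarrow> real^'n \<Rightarrow> real^'n \<Rightarrow> real)
    \<Rightarrow> (real^'n \<Rightarrow> real^'n \<Rightarrow> real) \<Rightarrow> bool" where
  "strong_2s \<Omega> ue u0 \<longleftrightarrow>
     ((\<lambda>\<epsilon>. L2norm \<Omega> (\<lambda>x y. Feps \<epsilon> (ue \<epsilon>) x y - u0 x y)) \<longlongrightarrow> 0) (at_right 0)"

definition strong_2s_vec :: "(real^'n) set \<Rightarrow> (real \<Rightarrow> real^'n \<Rightarrow> real^'n \<Rightarrow> real^'n)
    \<Rightarrow> (real^'n \<Rightarrow> real^'n \<Rightarrow> real^'n) \<Rightarrow> bool" where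
  "strong_2s_vec \<Omega> Ge G0 \<longleftrightarrow> (\<forall>i. strong_2s \<Omega> (\<lambda>\<epsilon> x y. Ge \<epsilon> x y $ i) (\<lambda>x y. G0 x y $ i))"

end

theory Submission
  imports Defs "HOL-Analysis.Analysis"
begin


lemma cont_borel: "continuous_on UNIV (f::'a::euclidean_space \<Rightarrow> 'b::euclidean_space) \<Longrightarrow> f \<in> borel_measurable lborel"
  by (simp add: borel_measurable_continuous_onI)

lemma CI:
  fixes f :: "'a::euclidean_space \<Rightarrow> real"
  assumes "continuous_on UNIV f" "compact K" "\<And>z. z \<notin> K \<Longrightarrow> f z = 0"
  shows "integrable lborel f"
proof -
  have "integrable lborel (\<lambda>x. indicator K x *\<^sub>R f x)"
    by (rule borel_integrable_compact[OF assms(2) continuous_on_subset[OF assms(1)]]) auto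
  moreover have "(\<lambda>x. indicator K x *\<^sub>R f x) = f" using assms(3) by (auto simp: indicator_def fun_eq_iff)
  ultimately show ?thesis by simp
qed

lemma CONV:
  fixes f :: "'a::euclidean_space \<Rightarrow> real"
  assumes "S \<in> sets lebesgue" "continuous_on UNIV f" "\<And>z. z \<notin> S \<Longrightarrow> f z = 0"
  shows "integral\<^sup>L (lebesgue_on S) f = integral\<^sup>L lborel f"
proof -
  have "integral\<^sup>L (lebesgue_on S) f = integral\<^sup>L lebesgue (\<lambda>x. indicator S x *\<^sub>R f x)"
    using assms(1) by (subst integral_restrict_space) auto
  also have "(\<lambda>x. indicator S x *\<^sub>R f x) = f" using assms(3) by (auto simp: indicator_def fun_eq_iff)
  also have "integral\<^sup>L lebesgue f = integral\<^sup>L lborel f"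
    by (rule integral_completion[OF cont_borel[OF assms(2)]])
  finally show ?thesis .
qed

lemma INT:
  fixes f :: "'a::euclidean_space \<Rightarrow> real"
  assumes "S \<in> sets lebesgue" "continuous_on UNIV f" "compact C" "\<And>z. z \<in> S \<Longrightarrow> z \<notin> C \<Longrightarrow> f z = 0"
  shows "integrable (lebesgue_on S) f"
proof -
  have i1: "integrable lborel (\<lambda>x. indicator C x *\<^sub>R f x)"
    by (rule borel_integrable_compact[OF assms(3) continuous_on_subset[OF assms(2)]]) auto
  have m: "(\<lambda>x. indicator C x *\<^sub>R f x) \<in> borel_measurable lborel"
    using i1 by auto
  have i2: "integrable lebesgue (\<lambda>x. indicator C x *\<^sub>R f x)"
    using i1 integrable_completion[OF m] by simp
  have "integrable lebesgue (\<lambda>x. indicator S x *\<^sub>R (indicator C x *\<^sub>R f x))"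
    by (rule integrable_mult_indicator[OF assms(1) i2])
  moreover have "(\<lambda>x. indicator S x *\<^sub>R (indicator C x *\<^sub>R f x)) = (\<lambda>x. indicator S x *\<^sub>R f x)"
    using assms(4) by (auto simp: indicator_def fun_eq_iff)
  ultimately show ?thesis using assms(1) by (subst integrable_restrict_space) auto
qed

lemma transl:
  fixes f :: "'a::euclidean_space \<Rightarrow> real"
  assumes "integrable lborel f"
  shows "integrable lborel (\<lambda>x. f (c + x))" "integral\<^sup>L lborel (\<lambda>x. f (c + x)) = integral\<^sup>L lborel f"
proof -
  have m: "f \<in> borel_measurable borel" using assms by auto
  have "integrable (distr lborel borel ((+) c)) f" using assms by (simp add: lborel_distr_plus)
  then show "integrable lborel (\<lambda>x. f (c + x))"
    by (subst (asm) integrable_distr_eq) (auto simp: m)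
  have "integral\<^sup>L lborel f = integral\<^sup>L (distr lborel borel ((+) c)) f" by (simp add: lborel_distr_plus)
  also have "\<dots> = integral\<^sup>L lborel (\<lambda>x. f (c + x))"
    by (rule integral_distr) (auto simp: m)
  finally show "integral\<^sup>L lborel (\<lambda>x. f (c + x)) = integral\<^sup>L lborel f" by simp
qed

lemma DZ:
  fixes g :: "'a::euclidean_space \<Rightarrow> real"
  assumes "open U" "z \<in> U" "\<And>w. w \<in> U \<Longrightarrow> g w = 0" "(g has_derivative g') (at z)"
  shows "g' = (\<lambda>_. 0)"
proof -
  have "((\<lambda>_. 0::real) has_derivative g') (at z)"
    by (rule has_derivative_transform_within_open[OF assms(4) assms(1) assms(2)]) (simp add: assms(3))
  moreover have "((\<lambda>_. 0::real) has_derivative (\<lambda>_. 0)) (at z)" by simp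
  ultimately show ?thesis using has_derivative_unique by blast
qed

lemma line_deriv:
  fixes g :: "'a::euclidean_space \<Rightarrow> real"
  assumes der: "\<And>z. (g has_derivative g' z) (at z)"
  shows "((\<lambda>h. g (z + h *\<^sub>R v)) has_real_derivative g' (z + h0 *\<^sub>R v) v) (at h0)"
proof -
  have d1: "((\<lambda>h. z + h *\<^sub>R v) has_derivative (\<lambda>h. h *\<^sub>R v)) (at h0)"
    by (auto intro!: derivative_eq_intros)
  have "((\<lambda>h. g (z + h *\<^sub>R v)) has_derivative (\<lambda>h. g' (z + h0 *\<^sub>R v) (h *\<^sub>R v))) (at h0)"
    using has_derivative_compose[OF d1 der] by (simp add: o_def)
  moreover have "(\<lambda>h. g' (z + h0 *\<^sub>R v) (h *\<^sub>R v)) = (*) (g' (z + h0 *\<^sub>R v) v)"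
  proof -
    have "linear (g' (z + h0 *\<^sub>R v))" using der has_derivative_linear by blast
    then show ?thesis by (auto simp: fun_eq_iff linear_cmul)
  qed
  ultimately show ?thesis by (simp add: has_field_derivative_def)
qed

lemma KL:
  fixes g :: "'a::euclidean_space \<Rightarrow> real"
  assumes K: "compact K" and gz: "\<And>z. z \<notin> K \<Longrightarrow> g z = 0"
  and der: "\<And>z. (g has_derivative g' z) (at z)"
  and cont: "continuous_on UNIV (\<lambda>z. g' z v)"
  shows "integrable lborel (\<lambda>z. g' z v)" "integral\<^sup>L lborel (\<lambda>z. g' z v) = 0"
proof -
  have wz: "g' z v = 0" if "z \<notin> K" for z
  proof -
    have "g' z = (\<lambda>_. 0)"
      by (rule DZ[OF _ _ _ der[of z], of "-K"]) (use K that gz compact_imp_closed in auto)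
    then show ?thesis by simp
  qed
  show int: "integrable lborel (\<lambda>z. g' z v)" by (rule CI[OF cont K wz])
  have gcont: "continuous_on UNIV g"
    using der has_derivative_continuous continuous_at_imp_continuous_on by blast
  have gint: "integrable lborel g" by (rule CI[OF gcont K gz])
  define C where "C = (\<lambda>p. fst p + snd p *\<^sub>R v) ` (K \<times> {-1..1::real})"
  have Cc: "compact C" unfolding C_def
    by (intro compact_continuous_image continuous_intros compact_Times K compact_Icc)
  have KC: "z \<in> C" if "z \<in> K" for z
    unfolding C_def using that by (auto intro!: image_eqI[where x="(z,0)"])
  have KC2: "z + s *\<^sub>R v \<in> C" if "z \<in> K" "-1 \<le> s" "s \<le> 1" for z s
    unfolding C_def using that by (auto intro!: image_eqI[where x="(z,s)"])
  obtain M where M: "M > 0" "\<And>x. x \<in> C \<Longrightarrow> norm (g' x v) \<le> M"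
    using compact_imp_bounded[OF compact_continuous_image[OF continuous_on_subset[OF cont] Cc]]
    unfolding bounded_pos by auto
  define t where "t n = 1 / real (Suc n)" for n
  have tpos: "0 < t n" "t n \<le> 1" for n unfolding t_def by (auto simp: field_simps)
  define s where "s n z = (g (z + t n *\<^sub>R v) - g z) / t n" for n z
  have sint: "integrable lborel (s n)" for n
    unfolding s_def using transl(1)[OF gint, of "t n *\<^sub>R v"] gint
    by (auto simp: add.commute)
  have s0: "integral\<^sup>L lborel (s n) = 0" for n
  proof -
    have i2: "integrable lborel (\<lambda>z. g (t n *\<^sub>R v + z))" using transl(1)[OF gint] .
    have i3: "integrable lborel (\<lambda>z. g (z + t n *\<^sub>R v))" using i2 by (simp add: add.commute)
    have e: "integral\<^sup>L lborel (\<lambda>z. g (z + t n *\<^sub>R v)) = integral\<^sup>L lborel g"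
      using transl(2)[OF gint, of "t n *\<^sub>R v"] by (simp add: add.commute)
    have "integral\<^sup>L lborel (s n) = (integral\<^sup>L lborel (\<lambda>z. g (z + t n *\<^sub>R v)) - integral\<^sup>L lborel g) / t n"
      unfolding s_def by (simp add: Bochner_Integration.integral_diff[OF i3 gint])
    then show ?thesis using e by simp
  qed
  have lim: "(\<lambda>n. s n z) \<longlonglongrightarrow> g' z v" for z
  proof -
    have "((\<lambda>h. g (z + h *\<^sub>R v)) has_real_derivative g' (z + 0 *\<^sub>R v) v) (at 0)"
      by (rule line_deriv[OF der])
    then have L: "((\<lambda>h. (g (z + h *\<^sub>R v) - g z) / h) \<longlongrightarrow> g' z v) (at 0)"
      by (simp add: DERIV_def)
    have "filterlim t (at 0) sequentially"
    proof (rule tendsto_imp_filterlim_at_right[THEN filterlim_mono])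
      show "(t \<longlongrightarrow> 0) sequentially" unfolding t_def using LIMSEQ_Suc[OF lim_const_over_n[of 1]]
        by (simp add: of_nat_Suc)
      show "\<forall>\<^sub>F x in sequentially. 0 < t x" using tpos by auto
    qed (auto simp: at_le)
    from filterlim_compose[OF L this] show ?thesis unfolding s_def o_def by simp
  qed
  have bound: "norm (s n z) \<le> M * indicator C z" for n z
  proof (cases "z \<in> K \<or> z + t n *\<^sub>R v \<in> K")
    case False
    then show ?thesis using gz M(1) by (auto simp: s_def indicator_def)
  next
    case True
    have zC: "z \<in> C"
    proof (cases "z \<in> K")
      case True then show ?thesis by (rule KC)
    next
      case False
      then have "z + t n *\<^sub>R v \<in> K" using \<open>z \<in> K \<or> z + t n *\<^sub>R v \<in> K\<close> by auto
      from KC2[OF this, of "- t n"] tpos[of n] show ?thesis by (simp add: algebra_simps)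
    qed
    obtain xi where xi: "0 < xi" "xi < t n"
      "g (z + t n *\<^sub>R v) - g (z + 0 *\<^sub>R v) = (t n - 0) * g' (z + xi *\<^sub>R v) v"
      using MVT2[of 0 "t n" "\<lambda>h. g (z + h *\<^sub>R v)" "\<lambda>h. g' (z + h *\<^sub>R v) v"] tpos[of n]
        line_deriv[OF der] by blast
    have xiC: "z + xi *\<^sub>R v \<in> C"
    proof (cases "z \<in> K")
      case True then show ?thesis using KC2[OF True, of xi] xi tpos[of n] by auto
    next
      case False
      then have "z + t n *\<^sub>R v \<in> K" using \<open>z \<in> K \<or> z + t n *\<^sub>R v \<in> K\<close> by auto
      from KC2[OF this, of "xi - t n"] tpos[of n] xi show ?thesis by (simp add: algebra_simps)
    qed
    have "s n z = g' (z + xi *\<^sub>R v) v" unfolding s_def using xi tpos[of n] by simp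
    then show ?thesis using M(2)[OF xiC] zC by simp
  qed
  have wint: "integrable lborel (\<lambda>z. M * indicator C z)"
  proof -
    have "integrable lborel (\<lambda>x. indicator C x *\<^sub>R M)"
      by (rule borel_integrable_compact[OF Cc]) auto
    then show ?thesis by (simp add: mult.commute)
  qed
  have "(\<lambda>n. integral\<^sup>L lborel (s n)) \<longlonglongrightarrow> integral\<^sup>L lborel (\<lambda>z. g' z v)"
    by (rule integral_dominated_convergence[OF cont_borel[OF cont] _ wint])
       (use sint lim bound in auto)
  then show "integral\<^sup>L lborel (\<lambda>z. g' z v) = 0"
    using s0 LIMSEQ_unique[OF _ tendsto_const[of 0]] by simp
qed



lemma test_C1:
  assumes "test_fun S \<theta>"
  shows "\<And>z. (\<theta> has_derivative frechet_derivative \<theta> (at z)) (at z)"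
    "\<And>w. continuous_on UNIV (\<lambda>z. frechet_derivative \<theta> (at z) w)"
    "compact (tsupport \<theta>)" "tsupport \<theta> \<subseteq> S" "\<And>z. z \<notin> tsupport \<theta> \<Longrightarrow> \<theta> z = 0"
proof -
  have "Ck (Suc 0) \<theta>" using assms unfolding test_fun_def smooth_fun_def by blast
  then have d: "\<theta> differentiable_on UNIV" and c: "\<And>w. continuous_on UNIV (\<lambda>z. frechet_derivative \<theta> (at z) w)"
    by auto
  show "\<And>z. (\<theta> has_derivative frechet_derivative \<theta> (at z)) (at z)"
    using d by (simp add: differentiable_on_def frechet_derivative_works)
  show "\<And>w. continuous_on UNIV (\<lambda>z. frechet_derivative \<theta> (at z) w)" by (rule c)
  show "compact (tsupport \<theta>)" "tsupport \<theta> \<subseteq> S" using assms unfolding test_fun_def by auto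
  show "\<theta> z = 0" if "z \<notin> tsupport \<theta>" for z
  proof (rule ccontr)
    assume "\<theta> z \<noteq> 0"
    then have "z \<in> {x. \<theta> x \<noteq> 0}" by simp
    then have "z \<in> tsupport \<theta>" unfolding tsupport_def using closure_subset by (rule subsetD[rotated])
    then show False using that by simp
  qed
qed

lemma WG:
  fixes u \<theta> :: "'a::euclidean_space \<Rightarrow> real"
  assumes S: "open S" and th: "test_fun S \<theta>"
  and uder: "\<And>z. (u has_derivative u' z) (at z)" and ucont: "continuous_on UNIV (\<lambda>z. u' z v)"
  shows "integral\<^sup>L (lebesgue_on S) (\<lambda>z. u z * frechet_derivative \<theta> (at z) v)
       = - integral\<^sup>L (lebesgue_on S) (\<lambda>z. u' z v * \<theta> z)"
proof -
  define K where "K = tsupport \<theta>"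
  note T = test_C1[OF th, folded K_def]
  have Kc: "compact K" by (rule T(3))
  have KS: "K \<subseteq> S" by (rule T(4))
  have th0: "\<theta> z = 0" if "z \<notin> K" for z using T(5) that by blast
  have thd0: "frechet_derivative \<theta> (at z) v = 0" if "z \<notin> K" for z
  proof -
    have "frechet_derivative \<theta> (at z) = (\<lambda>_. 0)"
      by (rule DZ[OF _ _ _ T(1)[of z], of "-K"]) (use Kc that th0 compact_imp_closed in auto)
    then show ?thesis by simp
  qed
  have ucont0: "continuous_on UNIV u"
    using uder has_derivative_continuous continuous_at_imp_continuous_on by blast
  have thcont: "continuous_on UNIV \<theta>"
    using T(1) has_derivative_continuous continuous_at_imp_continuous_on by blast
  have c1: "continuous_on UNIV (\<lambda>z. u z * frechet_derivative \<theta> (at z) v)"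
    by (rule continuous_on_mult[OF ucont0 T(2)])
  have c2: "continuous_on UNIV (\<lambda>z. u' z v * \<theta> z)"
    by (rule continuous_on_mult[OF ucont thcont])
  have i1: "integrable lborel (\<lambda>z. u z * frechet_derivative \<theta> (at z) v)"
    by (rule CI[OF c1 Kc]) (simp add: thd0)
  have i2: "integrable lborel (\<lambda>z. u' z v * \<theta> z)"
    by (rule CI[OF c2 Kc]) (simp add: th0)
  have der: "((\<lambda>z. u z * \<theta> z) has_derivative
      (\<lambda>h. u z * frechet_derivative \<theta> (at z) h + u' z h * \<theta> z)) (at z)" for z
    by (rule has_derivative_mult[OF uder T(1)])
  have "integral\<^sup>L lborel (\<lambda>z. u z * frechet_derivative \<theta> (at z) v + u' z v * \<theta> z) = 0"
    by (rule KL(2)[where g="\<lambda>z. u z * \<theta> z", OF Kc _ der]) (auto simp: th0 intro!: continuous_on_add[OF c1 c2])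
  then have E: "integral\<^sup>L lborel (\<lambda>z. u z * frechet_derivative \<theta> (at z) v) = - integral\<^sup>L lborel (\<lambda>z. u' z v * \<theta> z)"
    using Bochner_Integration.integral_add[OF i1 i2] by simp
  have Sl: "S \<in> sets lebesgue" using borel_open[OF S] by (simp add: sets_completionI_sets)
  have v1: "u z * frechet_derivative \<theta> (at z) v = 0" if "z \<notin> S" for z
    using KS thd0 that by auto
  have v2: "u' z v * \<theta> z = 0" if "z \<notin> S" for z
    using KS th0 that by auto
  show ?thesis
  proof -
    have "integral\<^sup>L (lebesgue_on S) (\<lambda>z. u z * frechet_derivative \<theta> (at z) v)
        = integral\<^sup>L lborel (\<lambda>z. u z * frechet_derivative \<theta> (at z) v)" by (rule CONV[OF Sl c1 v1])
    also have "\<dots> = - integral\<^sup>L lborel (\<lambda>z. u' z v * \<theta> z)" by (rule E)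
    also have "\<dots> = - integral\<^sup>L (lebesgue_on S) (\<lambda>z. u' z v * \<theta> z)" using CONV[OF Sl c2 v2] by simp
    finally show ?thesis .
  qed
qed



lemma One_cart: "(One::real^'n) $ i = 1"
  by (simp add: cart_eq_inner_axis inner_sum_Basis)

definition fv :: "real^'n \<Rightarrow> real^'n" where "fv y = (\<chi> i. of_int (floor (y $ i)))"

lemma frac_vec: "(\<chi> i. frac (y $ i)) = y - fv y"
  by (simp add: vec_eq_iff fv_def frac_def)

definition isint :: "real^'n \<Rightarrow> bool" where "isint k \<longleftrightarrow> (\<forall>i. k $ i \<in> \<int>)"

lemma supp_int:
  fixes \<psi>0 :: "(real^'n) \<times> (real^'n) \<Rightarrow> real"
  assumes "test_fun (\<Omega> \<times> box 0 One) \<psi>0" "isint k" "\<psi>0 (x, y - k) \<noteq> 0"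
  shows "k = fv y"
proof -
  have "(x, y - k) \<in> tsupport \<psi>0" using test_C1(5)[OF assms(1)] assms(3) by blast
  then have "y - k \<in> box 0 One" using test_C1(4)[OF assms(1)] by auto
  then have "\<forall>i. (0::real^'n) $ i < (y - k) $ i \<and> (y - k) $ i < (One::real^'n) $ i"
    using mem_box_cart(1) by blast
  then have b: "0 < y$i - k$i \<and> y$i - k$i < 1" for i by (simp only: One_cart zero_index vector_minus_component)
  show ?thesis
  proof (subst vec_eq_iff, intro allI)
    fix i
    obtain m where m: "k $ i = of_int m" using assms(2) unfolding isint_def by (meson Ints_cases)
    have "floor (y $ i) = m" using b[of i] m by (intro floor_unique) auto
    then show "k $ i = fv y $ i" by (simp add: fv_def m)
  qed
qed

definition nbrs :: "real^'n \<Rightarrow> (real^'n) set" where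
  "nbrs y0 = {k. \<forall>i. k $ i \<in> (\<lambda>c. of_int (floor (y0 $ i) + c)) ` {-1,0,1::int}}"

lemma nbrs_finite: "finite (nbrs y0)"
proof -
  let ?A = "\<lambda>i. (\<lambda>c. of_int (floor (y0 $ i) + c) :: real) ` {-1,0,1::int}"
  have "nbrs y0 \<subseteq> (\<lambda>f. \<chi> i. f i) ` (PiE UNIV ?A)"
  proof
    fix k assume "k \<in> nbrs y0"
    then have "(\<lambda>i. k $ i) \<in> PiE UNIV ?A" unfolding nbrs_def by (auto simp: PiE_iff)
    then show "k \<in> (\<lambda>f. \<chi> i. f i) ` (PiE UNIV ?A)" by (intro image_eqI[where x="\<lambda>i. k $ i"]) auto
  qed
  moreover have "finite (PiE UNIV ?A)" by (intro finite_PiE) auto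
  ultimately show ?thesis by (meson finite_imageI finite_subset)
qed

lemma nbrs_int:
  assumes "k \<in> nbrs y0" shows "isint k"
  unfolding isint_def
proof
  fix i
  from assms obtain c where "k $ i = of_int (floor (y0 $ i) + c)" unfolding nbrs_def by blast
  then show "k $ i \<in> \<int>" by (metis Ints_of_int)
qed

lemma fv_nbrs:
  fixes y y0 :: "real^'n"
  assumes "dist y y0 < 1" shows "fv y \<in> nbrs y0"
proof -
  have c: "floor (y $ i) - floor (y0 $ i) \<in> {-1,0,1}" for i
  proof -
    have d0: "\<bar>y $ i - y0 $ i\<bar> < 1" using assms component_le_norm_cart[of "y - y0" i]
      by (simp add: dist_norm)
    then have d: "y $ i - y0 $ i < 1" "y0 $ i - y $ i < 1" by (auto simp: abs_less_iff)
    have a: "real_of_int \<lfloor>y$i\<rfloor> < real_of_int (\<lfloor>y0$i\<rfloor> + 2)"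
      using d of_int_floor_le[of "y$i"] real_of_int_floor_add_one_gt[of "y0$i"] by linarith
    have b: "real_of_int (\<lfloor>y0$i\<rfloor> - 2) < real_of_int \<lfloor>y$i\<rfloor>"
      using d of_int_floor_le[of "y0$i"] real_of_int_floor_add_one_gt[of "y$i"] by linarith
    from a b have "\<lfloor>y$i\<rfloor> < \<lfloor>y0$i\<rfloor> + 2" "\<lfloor>y0$i\<rfloor> - 2 < \<lfloor>y$i\<rfloor>" by (simp_all only: of_int_less_iff)
    then show ?thesis by auto
  qed
  show ?thesis unfolding nbrs_def
  proof (intro CollectI allI)
    fix i
    have "fv y $ i = real_of_int (\<lfloor>y0$i\<rfloor> + (\<lfloor>y$i\<rfloor> - \<lfloor>y0$i\<rfloor>))" by (simp add: fv_def)
    moreover have "\<lfloor>y$i\<rfloor> - \<lfloor>y0$i\<rfloor> \<in> {-1,0,1}" by (rule c)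
    ultimately show "fv y $ i \<in> (\<lambda>c. real_of_int (\<lfloor>y0$i\<rfloor> + c)) ` {-1,0,1}" by blast
  qed
qed
lemma Pu_rep:
  fixes \<psi>0 :: "(real^'n) \<times> (real^'n) \<Rightarrow> real"
  assumes T: "test_fun (\<Omega> \<times> box 0 One) \<psi>0" and d: "dist y y0 < 1"
  shows "per_ext \<psi>0 x y = (\<Sum>k\<in>nbrs y0. \<psi>0 ((x, y) - (0, k)))"
proof -
  have "(\<Sum>k\<in>nbrs y0. \<psi>0 ((x,y) - (0,k))) = (\<Sum>k\<in>nbrs y0. if k = fv y then \<psi>0 (x, y - fv y) else 0)"
  proof (rule sum.cong)
    fix k assume k: "k \<in> nbrs y0"
    show "\<psi>0 ((x,y) - (0,k)) = (if k = fv y then \<psi>0 (x, y - fv y) else 0)"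
      using supp_int[OF T nbrs_int[OF k], of x y] by auto
  qed simp
  also have "\<dots> = \<psi>0 (x, y - fv y)" by (simp add: sum.delta[OF nbrs_finite] fv_nbrs[OF d])
  also have "\<dots> = per_ext \<psi>0 x y" by (simp add: per_ext_def frac_vec)
  finally show ?thesis by simp
qed

lemma LOC:
  fixes f g :: "'a::euclidean_space \<Rightarrow> real"
  assumes N: "open N" "z0 \<in> N" and eq: "\<And>z. z \<in> N \<Longrightarrow> f z = g z"
    and gd: "\<And>z. (g has_derivative g' z) (at z)" and gc: "\<And>w. continuous_on UNIV (\<lambda>z. g' z w)"
  shows "(f has_derivative g' z0) (at z0)" "isCont (\<lambda>z. frechet_derivative f (at z) w) z0"
proof -
  have fd: "(f has_derivative g' z) (at z)" if "z \<in> N" for z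
    by (rule has_derivative_transform_within_open[OF gd N(1) that]) (simp add: eq)
  show "(f has_derivative g' z0) (at z0)" by (rule fd[OF N(2)])
  have "continuous_on N (\<lambda>z. frechet_derivative f (at z) w)"
    by (rule continuous_on_eq[OF continuous_on_subset[OF gc]]) (auto simp: frechet_derivative_at[OF fd])
  then show "isCont (\<lambda>z. frechet_derivative f (at z) w) z0"
    using continuous_on_eq_continuous_at[OF N(1)] N(2) by blast
qed

definition Pu :: "((real^'n) \<times> (real^'n) \<Rightarrow> real) \<Rightarrow> (real^'n) \<times> (real^'n) \<Rightarrow> real" where
  "Pu \<psi>0 z = per_ext \<psi>0 (fst z) (snd z)"

lemma Pu_C1:
  fixes \<psi>0 :: "(real^'n) \<times> (real^'n) \<Rightarrow> real"
  assumes T: "test_fun (\<Omega> \<times> box 0 One) \<psi>0"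
  shows "\<And>z. (Pu \<psi>0 has_derivative frechet_derivative (Pu \<psi>0) (at z)) (at z)"
        "\<And>w. continuous_on UNIV (\<lambda>z. frechet_derivative (Pu \<psi>0) (at z) w)"
proof -
  note TC = test_C1[OF T]
  define D where "D z = frechet_derivative \<psi>0 (at z)" for z
  have main: "(Pu \<psi>0 has_derivative (\<lambda>h. \<Sum>k\<in>nbrs (snd z0). D (z0 - (0,k)) h)) (at z0) \<and>
      isCont (\<lambda>z. frechet_derivative (Pu \<psi>0) (at z) w) z0" for z0 w
  proof -
    let ?F = "nbrs (snd z0)"
    define g where "g z = (\<Sum>k\<in>?F. \<psi>0 (z - (0,k)))" for z
    have gd: "(g has_derivative (\<lambda>h. \<Sum>k\<in>?F. D (z - (0,k)) h)) (at z)" for z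
      unfolding g_def
    proof (rule has_derivative_sum)
      fix k
      have "((\<lambda>z. z - (0,k)) has_derivative (\<lambda>h. h)) (at z)"
        using has_derivative_diff[OF has_derivative_ident has_derivative_const, of "(0,k)" "at z"] by simp
      from has_derivative_compose[OF this TC(1)]
      show "((\<lambda>z. \<psi>0 (z - (0,k))) has_derivative D (z - (0,k))) (at z)" by (simp add: D_def o_def)
    qed
    have gc: "continuous_on UNIV (\<lambda>z. \<Sum>k\<in>?F. D (z - (0,k)) w')" for w'
    proof (rule continuous_on_sum)
      fix k
      have "continuous_on UNIV (\<lambda>z::(real^'n) \<times> (real^'n). z - (0,k))" by (intro continuous_intros)
      then show "continuous_on UNIV (\<lambda>z. D (z - (0,k)) w')"
        unfolding D_def by (rule continuous_on_compose2[OF TC(2)]) auto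
    qed
    let ?N = "(UNIV::(real^'n) set) \<times> ball (snd z0) 1"
    have N: "open ?N" "z0 \<in> ?N" by (auto intro: open_Times simp: mem_Times_iff)
    have eq: "Pu \<psi>0 z = g z" if "z \<in> ?N" for z
      using Pu_rep[OF T, of "snd z" "snd z0" "fst z"] that by (auto simp: Pu_def g_def dist_commute mem_Times_iff)
    show ?thesis using LOC[OF N eq gd gc] by blast
  qed
  show "(Pu \<psi>0 has_derivative frechet_derivative (Pu \<psi>0) (at z)) (at z)" for z
    using main[of z] frechet_derivative_works differentiableI by blast
  show "continuous_on UNIV (\<lambda>z. frechet_derivative (Pu \<psi>0) (at z) w)" for w
    using main by (intro continuous_at_imp_continuous_on) blast
qed

lemma partial_x:
  assumes "(f has_derivative D) (at (x,y))"
  shows "frechet_derivative (\<lambda>x'. f (x',y)) (at x) = (\<lambda>h. D (h,0))"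
proof -
  have "((\<lambda>x'. (x',y)) has_derivative (\<lambda>h. (h,0))) (at x)" by (auto intro!: derivative_eq_intros)
  from has_derivative_compose[OF this assms]
  have "((\<lambda>x'. f (x',y)) has_derivative (\<lambda>h. D (h,0))) (at x)" by (simp add: o_def)
  then show ?thesis using frechet_derivative_at by metis
qed

lemma partial_y:
  assumes "(f has_derivative D) (at (x,y))"
  shows "frechet_derivative (\<lambda>y'. f (x,y')) (at y) = (\<lambda>h. D (0,h))"
proof -
  have "((\<lambda>y'. (x,y')) has_derivative (\<lambda>h. (0,h))) (at y)" by (auto intro!: derivative_eq_intros)
  from has_derivative_compose[OF this assms]
  have "((\<lambda>y'. f (x,y')) has_derivative (\<lambda>h. D (0,h))) (at y)" by (simp add: o_def)
  then show ?thesis using frechet_derivative_at by metis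
qed



lemma sets_OU:
  fixes \<Omega> :: "(real^'n) set"
  assumes "open \<Omega>"
  shows "\<Omega> \<times> (UNIV::(real^'n) set) \<in> sets lebesgue" "\<Omega> \<times> (unitY::(real^'n) set) \<in> sets lebesgue"
proof -
  have o: "open (\<Omega> \<times> (UNIV::(real^'n) set))" using assms by (intro open_Times) auto
  show "\<Omega> \<times> (UNIV::(real^'n) set) \<in> sets lebesgue"
    using borel_open[OF o] by (simp add: sets_completionI_sets)
  have o2: "open (\<Omega> \<times> (UNIV::(real^'n) set))" by (rule o)
  have c2: "closed ((UNIV::(real^'n) set) \<times> (unitY::(real^'n) set))"
    unfolding unitY_def by (intro closed_Times) auto
  have e: "\<Omega> \<times> (unitY::(real^'n) set) = (\<Omega> \<times> UNIV) \<inter> (UNIV \<times> unitY)" by auto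
  have "\<Omega> \<times> (unitY::(real^'n) set) \<in> sets borel"
    unfolding e by (intro sets.Int borel_open[OF o2] borel_closed[OF c2])
  then show "\<Omega> \<times> (unitY::(real^'n) set) \<in> sets lebesgue" by (simp add: sets_completionI_sets)
qed

lemma L2sharp_intro:
  fixes \<Omega> :: "(real^'n) set" and u :: "real^'n \<Rightarrow> real^'n \<Rightarrow> real"
  assumes "open \<Omega>" "periodic_y u" "continuous_on UNIV (\<lambda>z. u (fst z) (snd z))" "compact C"
    "\<And>x y. x \<in> \<Omega> \<Longrightarrow> y \<in> unitY \<Longrightarrow> (x,y) \<notin> C \<Longrightarrow> u x y = 0"
  shows "L2sharp \<Omega> u"
  unfolding L2sharp_def
proof (intro conjI)
  show "periodic_y u" by (rule assms(2))
  show "(\<lambda>(x, y). u x y) \<in> borel_measurable (lebesgue_on (\<Omega> \<times> UNIV))"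
    unfolding case_prod_unfold
    by (rule continuous_imp_measurable_on_sets_lebesgue[OF continuous_on_subset[OF assms(3)] sets_OU(1)[OF assms(1)]]) auto
  have c: "continuous_on UNIV (\<lambda>z. (u (fst z) (snd z))\<^sup>2)"
    by (rule continuous_on_power[OF assms(3)])
  show "integrable (lebesgue_on (\<Omega> \<times> unitY)) (\<lambda>(x, y). (u x y)\<^sup>2)"
    unfolding case_prod_unfold
    by (rule INT[OF sets_OU(2)[OF assms(1)] c assms(4)]) (use assms(5) in auto)
qed

lemma HWG:
  fixes \<Omega> :: "(real^'n) set" and u :: "real^'n \<Rightarrow> real^'n \<Rightarrow> real"
  assumes "open \<Omega>" "\<And>z. ((\<lambda>z. u (fst z) (snd z)) has_derivative U' z) (at z)"
    "\<And>i. continuous_on UNIV (\<lambda>z. U' z (axis i 1, 0))"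
    "\<And>x y i. G x y $ i = U' (x,y) (axis i 1, 0)"
  shows "has_weak_grad_x \<Omega> u G"
  unfolding has_weak_grad_x_def
proof (intro allI impI)
  fix \<theta> :: "(real^'n) \<times> (real^'n) \<Rightarrow> real" and i :: 'n
  assume th: "test_fun (\<Omega> \<times> UNIV) \<theta>"
  have o: "open (\<Omega> \<times> (UNIV::(real^'n) set))" using assms(1) by (intro open_Times) auto
  have W: "integral\<^sup>L (lebesgue_on (\<Omega> \<times> UNIV)) (\<lambda>z. u (fst z) (snd z) * frechet_derivative \<theta> (at z) (axis i 1, 0))
       = - integral\<^sup>L (lebesgue_on (\<Omega> \<times> UNIV)) (\<lambda>z. U' z (axis i 1, 0) * \<theta> z)"
    by (rule WG[OF o th assms(2) assms(3)])
  have e: "(\<lambda>(x, y). G x y $ i * \<theta> (x, y)) = (\<lambda>z. U' z (axis i 1, 0) * \<theta> z)"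
    by (auto simp: fun_eq_iff assms(4))
  show "integral\<^sup>L (lebesgue_on (\<Omega> \<times> UNIV)) (\<lambda>(x, y). u x y * frechet_derivative \<theta> (at (x, y)) (axis i 1, 0)) =
        - integral\<^sup>L (lebesgue_on (\<Omega> \<times> UNIV)) (\<lambda>(x, y). G x y $ i * \<theta> (x, y))"
    unfolding e using W by (simp add: case_prod_unfold)
qed

lemma ev_pos: "eventually (\<lambda>\<epsilon>::real. \<epsilon> > 0) (at_right 0)"
  by (simp add: eventually_at_filter)

lemma S2_scale:
  fixes \<Omega> :: "(real^'n) set"
  assumes "\<And>\<epsilon> x y. \<epsilon> > 0 \<Longrightarrow> x \<in> \<Omega> \<Longrightarrow> Feps \<epsilon> (ue \<epsilon>) x y - u0 x y = \<epsilon> * g x y"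
  shows "strong_2s \<Omega> ue u0"
  unfolding strong_2s_def
proof -
  define A where "A = integral\<^sup>L (lebesgue_on (\<Omega> \<times> unitY)) (\<lambda>(x, y). (g x y)\<^sup>2)"
  have "eventually (\<lambda>\<epsilon>. sqrt (\<epsilon>\<^sup>2 * A) = L2norm \<Omega> (\<lambda>x y. Feps \<epsilon> (ue \<epsilon>) x y - u0 x y)) (at_right 0)"
    using ev_pos
  proof eventually_elim
    case (elim \<epsilon>)
    have "integral\<^sup>L (lebesgue_on (\<Omega> \<times> unitY)) (\<lambda>(x, y). (Feps \<epsilon> (ue \<epsilon>) x y - u0 x y)\<^sup>2)
        = integral\<^sup>L (lebesgue_on (\<Omega> \<times> unitY)) (\<lambda>z. \<epsilon>\<^sup>2 * (case z of (x, y) \<Rightarrow> (g x y)\<^sup>2))"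
      by (rule Bochner_Integration.integral_cong)
         (auto simp: space_restrict_space assms[OF elim] power_mult_distrib)
    also have "\<dots> = \<epsilon>\<^sup>2 * A" unfolding A_def by (rule integral_mult_right_zero)
    finally show ?case unfolding L2norm_def by simp
  qed
  moreover have "((\<lambda>\<epsilon>. sqrt (\<epsilon>\<^sup>2 * A)) \<longlongrightarrow> sqrt (0\<^sup>2 * A)) (at_right 0)"
    by (intro tendsto_intros)
  ultimately show "((\<lambda>\<epsilon>. L2norm \<Omega> (\<lambda>x y. Feps \<epsilon> (ue \<epsilon>) x y - u0 x y)) \<longlongrightarrow> 0) (at_right 0)"
    using Lim_transform_eventually by fastforce
qed

lemma S2_zero:
  fixes \<Omega> :: "(real^'n) set"
  assumes "\<And>\<epsilon> x y. \<epsilon> > 0 \<Longrightarrow> x \<in> \<Omega> \<Longrightarrow> Feps \<epsilon> (ue \<epsilon>) x y = u0 x y"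
  shows "strong_2s \<Omega> ue u0"
  by (rule S2_scale[where g="\<lambda>x y. 0"]) (simp add: assms)



lemma grad_comp: "grad f x $ i = frechet_derivative f (at x) (axis i 1)"
  by (simp add: grad_def)

lemma part1:
  fixes \<Omega> :: "(real^'n) set" and \<phi> :: "real^'n \<Rightarrow> real"
  assumes \<Omega>: "open \<Omega>" and T: "test_fun \<Omega> \<phi>"
  shows "\<exists>\<phi>e Ge.
              (\<forall>\<epsilon>>0. L2sharp_H1 \<Omega> (\<phi>e \<epsilon>) \<and> L2sharp_vec \<Omega> (Ge \<epsilon>)
                 \<and> has_weak_grad_x \<Omega> (\<phi>e \<epsilon>) (Ge \<epsilon>)
                 \<and> (\<forall>x\<in>\<Omega>. \<forall>y. Feps \<epsilon> (\<phi>e \<epsilon>) x y = \<phi> x)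
                 \<and> (\<forall>x\<in>\<Omega>. \<forall>y. Feps \<epsilon> (Ge \<epsilon>) x y = grad \<phi> x))
            \<and> strong_2s \<Omega> \<phi>e (\<lambda>x y. \<phi> x)
            \<and> strong_2s_vec \<Omega> Ge (\<lambda>x y. grad \<phi> x)"
proof -
  note TC = test_C1[OF T]
  define K where "K = tsupport \<phi>"
  define D where "D x = frechet_derivative \<phi> (at x)" for x
  have Kc: "compact K" using TC(3) by (simp add: K_def)
  have uY: "compact (unitY::(real^'n) set)" by (simp add: unitY_def)
  have KY: "compact (K \<times> (unitY::(real^'n) set))" by (intro compact_Times Kc uY)
  have phi0: "\<phi> x = 0" if "x \<notin> K" for x using TC(5) that K_def by blast
  have D0: "D x = (\<lambda>_. 0)" if "x \<notin> K" for x
    unfolding D_def by (rule DZ[OF _ _ _ TC(1)[of x], of "-K"]) (use Kc that phi0 compact_imp_closed in auto)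
  have phic: "continuous_on UNIV \<phi>"
    using TC(1) has_derivative_continuous continuous_at_imp_continuous_on by blast
  have Dc: "continuous_on UNIV (\<lambda>z::(real^'n)\<times>(real^'n). D (fst z) w)" for w
    unfolding D_def by (rule continuous_on_compose2[OF TC(2)]) (auto intro: continuous_intros)
  have uder: "((\<lambda>z::(real^'n)\<times>(real^'n). \<phi> (fst z)) has_derivative (\<lambda>h. D (fst z) (fst h))) (at z)" for z
  proof -
    have "((\<lambda>z::(real^'n)\<times>(real^'n). fst z) has_derivative (\<lambda>h. fst h)) (at z)"
      by (rule has_derivative_fst[OF has_derivative_ident])
    from has_derivative_compose[OF this TC(1)] show ?thesis by (simp add: D_def o_def)
  qed
  define \<phi>e where "\<phi>e = (\<lambda>(\<epsilon>::real) (x::real^'n) (y::real^'n). \<phi> x)"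
  define Ge where "Ge = (\<lambda>(\<epsilon>::real) (x::real^'n) (y::real^'n). grad \<phi> x)"
  have L1: "L2sharp \<Omega> (\<phi>e \<epsilon>)" for \<epsilon>
  proof (rule L2sharp_intro[OF \<Omega> _ _ KY])
    show "periodic_y (\<phi>e \<epsilon>)" by (simp add: periodic_y_def \<phi>e_def)
    show "continuous_on UNIV (\<lambda>z. \<phi>e \<epsilon> (fst z) (snd z))"
      unfolding \<phi>e_def by (rule continuous_on_compose2[OF phic]) (auto intro: continuous_intros)
  qed (auto simp: \<phi>e_def phi0)
  have L2: "L2sharp_vec \<Omega> (Ge \<epsilon>)" for \<epsilon>
    unfolding L2sharp_vec_def
  proof
    fix i
    show "L2sharp \<Omega> (\<lambda>x y. Ge \<epsilon> x y $ i)"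
    proof (rule L2sharp_intro[OF \<Omega> _ _ KY])
      show "periodic_y (\<lambda>x y. Ge \<epsilon> x y $ i)" by (simp add: periodic_y_def Ge_def)
      show "continuous_on UNIV (\<lambda>z. Ge \<epsilon> (fst z) (snd z) $ i)"
        using Dc[of "axis i 1"] by (simp add: Ge_def grad_comp D_def)
    qed (auto simp: Ge_def grad_comp D0[unfolded D_def])
  qed
  have W: "has_weak_grad_x \<Omega> (\<phi>e \<epsilon>) (Ge \<epsilon>)" for \<epsilon>
  proof (rule HWG[OF \<Omega>])
    show "((\<lambda>z. \<phi>e \<epsilon> (fst z) (snd z)) has_derivative (\<lambda>h. D (fst z) (fst h))) (at z)" for z
      using uder by (simp add: \<phi>e_def)
    show "continuous_on UNIV (\<lambda>z::(real^'n)\<times>(real^'n). D (fst z) (fst (axis i 1 :: real^'n, 0 :: real^'n)))" for i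
      using Dc[of "axis i 1"] by simp
    show "Ge \<epsilon> x y $ i = D (fst (x,y)) (fst (axis i 1 :: real^'n, 0 :: real^'n))" for x y i
      by (simp add: Ge_def grad_comp D_def)
  qed
  show ?thesis
  proof (intro exI[of _ \<phi>e] exI[of _ Ge] conjI allI impI ballI)
    fix \<epsilon> :: real assume "\<epsilon> > 0"
    show "L2sharp_H1 \<Omega> (\<phi>e \<epsilon>)" unfolding L2sharp_H1_def using L1 L2 W by blast
    show "L2sharp_vec \<Omega> (Ge \<epsilon>)" by (rule L2)
    show "has_weak_grad_x \<Omega> (\<phi>e \<epsilon>) (Ge \<epsilon>)" by (rule W)
    show "Feps \<epsilon> (\<phi>e \<epsilon>) x y = \<phi> x" for x y by (simp add: Feps_def \<phi>e_def)
    show "Feps \<epsilon> (Ge \<epsilon>) x y = grad \<phi> x" for x y by (simp add: Feps_def Ge_def)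
  next
    show "strong_2s \<Omega> \<phi>e (\<lambda>x y. \<phi> x)" by (rule S2_zero) (simp add: Feps_def \<phi>e_def)
    show "strong_2s_vec \<Omega> Ge (\<lambda>x y. grad \<phi> x)" unfolding strong_2s_vec_def
      by (intro allI S2_zero) (simp add: Feps_def Ge_def)
  qed
qed




lemma part2:
  fixes \<Omega> :: "(real^'n) set" and \<psi>0 :: "(real^'n) \<times> (real^'n) \<Rightarrow> real"
  assumes \<Omega>: "open \<Omega>" and T: "test_fun (\<Omega> \<times> box 0 One) \<psi>0"
  shows "\<exists>\<psi>e Ge.
              (\<forall>\<epsilon>>0. L2sharp_H1 \<Omega> (\<psi>e \<epsilon>) \<and> L2sharp_vec \<Omega> (Ge \<epsilon>)
                 \<and> has_weak_grad_x \<Omega> (\<psi>e \<epsilon>) (Ge \<epsilon>)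
                 \<and> (\<forall>x\<in>\<Omega>. \<forall>y. Feps \<epsilon> (\<psi>e \<epsilon>) x y = per_ext \<psi>0 x y)
                 \<and> (\<forall>x\<in>\<Omega>. \<forall>y. \<epsilon> *\<^sub>R Feps \<epsilon> (Ge \<epsilon>) x y
                        = grad_y (per_ext \<psi>0) x y + \<epsilon> *\<^sub>R grad_x (per_ext \<psi>0) x y))
            \<and> strong_2s \<Omega> \<psi>e (per_ext \<psi>0)
            \<and> strong_2s_vec \<Omega> (\<lambda>\<epsilon> x y. \<epsilon> *\<^sub>R Ge \<epsilon> x y) (grad_y (per_ext \<psi>0))"
proof -
  note TC = test_C1[OF T]
  note PC = Pu_C1[OF T]
  define P where "P = Pu \<psi>0"
  define D where "D z = frechet_derivative P (at z)" for z
  have PD: "(P has_derivative D z) (at z)" for z unfolding P_def D_def by (rule PC(1))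
  have DC: "continuous_on UNIV (\<lambda>z. D z w)" for w unfolding P_def D_def by (rule PC(2))
  have Pc: "continuous_on UNIV P"
    using PD has_derivative_continuous continuous_at_imp_continuous_on by blast
  have pe: "per_ext \<psi>0 x y = P (x,y)" for x y by (simp add: P_def Pu_def)
  define Kx where "Kx = fst ` tsupport \<psi>0"
  have Kxc: "compact Kx" unfolding Kx_def
    using compact_continuous_image[OF continuous_on_fst[OF continuous_on_id] TC(3)] by simp
  have uY: "compact (unitY::(real^'n) set)" by (simp add: unitY_def)
  have KY: "compact (Kx \<times> (unitY::(real^'n) set))" by (intro compact_Times Kxc uY)
  have P0: "P z = 0" if "fst z \<notin> Kx" for z
  proof (rule ccontr)
    assume "P z \<noteq> 0"
    then have "\<psi>0 (fst z, \<chi> i. frac (snd z $ i)) \<noteq> 0" by (simp add: P_def Pu_def per_ext_def)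
    then have "(fst z, \<chi> i. frac (snd z $ i)) \<in> tsupport \<psi>0" using TC(5) by blast
    then have "fst z \<in> Kx" unfolding Kx_def by (metis fst_conv image_eqI)
    then show False using that by simp
  qed
  have D0: "D z = (\<lambda>_. 0)" if "fst z \<notin> Kx" for z
  proof (rule DZ[OF _ _ _ PD[of z], of "(-Kx) \<times> UNIV"])
    show "open ((-Kx) \<times> (UNIV::(real^'n) set))" using Kxc compact_imp_closed by (intro open_Times) auto
  qed (use that P0 in \<open>auto simp: mem_Times_iff\<close>)
  have Pper: "P (z + (0,k)) = P z" if "\<forall>i. k $ i \<in> \<int>" for z k
  proof -
    have "(\<chi> i. frac ((snd z + k) $ i)) = (\<chi> i. frac (snd z $ i))"
      using that by (simp add: vec_eq_iff frac_add_int_right)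
    then show ?thesis by (simp add: P_def Pu_def per_ext_def)
  qed
  have Dper: "D (z + (0,k)) = D z" if "\<forall>i. k $ i \<in> \<int>" for z k
  proof -
    have tr: "((\<lambda>w. w + (0,k)) has_derivative (\<lambda>h. h)) (at z)"
      using has_derivative_add[OF has_derivative_ident has_derivative_const, of "(0,k)" "at z"] by simp
    have "((\<lambda>w. P (w + (0,k))) has_derivative D (z + (0,k))) (at z)"
      using has_derivative_compose[OF tr PD[of "z + (0,k)"]] by (simp add: o_def)
    moreover have "(\<lambda>w. P (w + (0,k))) = P" using Pper[OF that] by auto
    ultimately have "(P has_derivative D (z + (0,k))) (at z)" by simp
    then show ?thesis using PD[of z] has_derivative_unique by blast
  qed
  define \<psi>e where "\<psi>e = (\<lambda>(\<epsilon>::real) (x::real^'n) (y::real^'n). per_ext \<psi>0 x (y + (1/\<epsilon>) *\<^sub>R x))"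
  define Ge where "Ge = (\<lambda>(\<epsilon>::real) (x::real^'n) (y::real^'n).
      (\<chi> i. D (x, y + (1/\<epsilon>) *\<^sub>R x) (axis i 1, (1/\<epsilon>) *\<^sub>R axis i 1)) :: real^'n)"
  define TT where "TT \<epsilon> z = (fst z, snd z + (1/\<epsilon>) *\<^sub>R fst z)" for \<epsilon> :: real and z :: "(real^'n) \<times> (real^'n)"
  have TTd: "(TT \<epsilon> has_derivative TT \<epsilon>) (at z)" for \<epsilon> z
    unfolding TT_def by (auto intro!: derivative_eq_intros)
  have TTc: "continuous_on UNIV (TT \<epsilon>)" for \<epsilon>
    unfolding TT_def by (intro continuous_intros)
  have ue: "\<psi>e \<epsilon> (fst z) (snd z) = P (TT \<epsilon> z)" for \<epsilon> z by (simp add: \<psi>e_def TT_def pe)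
  have uder: "((\<lambda>z. \<psi>e \<epsilon> (fst z) (snd z)) has_derivative (\<lambda>h. D (TT \<epsilon> z) (TT \<epsilon> h))) (at z)" for \<epsilon> z
    unfolding ue using has_derivative_compose[OF TTd PD] by (simp add: o_def)
  have DTc: "continuous_on UNIV (\<lambda>z. D (TT \<epsilon> z) w)" for \<epsilon> w
    by (rule continuous_on_compose2[OF DC TTc]) auto
  have Gcomp: "Ge \<epsilon> x y $ i = D (TT \<epsilon> (x,y)) (TT \<epsilon> (axis i 1, 0))" for \<epsilon> x y i
    by (simp add: Ge_def TT_def)
  have L1: "L2sharp \<Omega> (\<psi>e \<epsilon>)" for \<epsilon>
  proof (rule L2sharp_intro[OF \<Omega> _ _ KY])
    show "periodic_y (\<psi>e \<epsilon>)" unfolding periodic_y_def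
    proof (intro allI impI)
      fix x y k :: "real^'n" assume k: "\<forall>i. k $ i \<in> \<int>"
      have "\<psi>e \<epsilon> x (y + k) = P ((x, y + (1/\<epsilon>) *\<^sub>R x) + (0,k))" by (simp add: \<psi>e_def pe algebra_simps)
      also have "\<dots> = \<psi>e \<epsilon> x y" using Pper[OF k, of "(x, y + (1/\<epsilon>) *\<^sub>R x)"] by (simp add: \<psi>e_def pe)
      finally show "\<psi>e \<epsilon> x (y + k) = \<psi>e \<epsilon> x y" .
    qed
    show "continuous_on UNIV (\<lambda>z. \<psi>e \<epsilon> (fst z) (snd z))"
      unfolding ue by (rule continuous_on_compose2[OF Pc TTc]) auto
  qed (auto simp: \<psi>e_def pe P0)
  have L2: "L2sharp_vec \<Omega> (Ge \<epsilon>)" for \<epsilon>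
    unfolding L2sharp_vec_def
  proof
    fix i
    show "L2sharp \<Omega> (\<lambda>x y. Ge \<epsilon> x y $ i)"
    proof (rule L2sharp_intro[OF \<Omega> _ _ KY])
      show "periodic_y (\<lambda>x y. Ge \<epsilon> x y $ i)" unfolding periodic_y_def
      proof (intro allI impI)
        fix x y k :: "real^'n" assume k: "\<forall>i. k $ i \<in> \<int>"
        have "TT \<epsilon> (x, y + k) = TT \<epsilon> (x,y) + (0,k)" by (simp add: TT_def algebra_simps)
        then show "Ge \<epsilon> x (y + k) $ i = Ge \<epsilon> x y $ i" by (simp add: Gcomp Dper[OF k])
      qed
      show "continuous_on UNIV (\<lambda>z. Ge \<epsilon> (fst z) (snd z) $ i)"
        using DTc[of \<epsilon> "TT \<epsilon> (axis i 1, 0)"] by (simp add: Gcomp)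
    qed (auto simp: Gcomp TT_def D0)
  qed
  have W: "has_weak_grad_x \<Omega> (\<psi>e \<epsilon>) (Ge \<epsilon>)" for \<epsilon>
  proof (rule HWG[OF \<Omega> uder])
    show "continuous_on UNIV (\<lambda>z. D (TT \<epsilon> z) (TT \<epsilon> (axis i 1, 0)))" for i by (rule DTc)
    show "Ge \<epsilon> x y $ i = D (TT \<epsilon> (x, y)) (TT \<epsilon> (axis i 1, 0))" for x y i by (rule Gcomp)
  qed
  have gy: "grad_y (per_ext \<psi>0) x y $ i = D (x,y) (0, axis i 1)" for x y i
  proof -
    have "per_ext \<psi>0 x = (\<lambda>y'. P (x,y'))" by (simp add: fun_eq_iff pe)
    then show ?thesis using partial_y[OF PD[of "(x,y)"]] by (simp add: grad_y_def grad_comp)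
  qed
  have gx: "grad_x (per_ext \<psi>0) x y $ i = D (x,y) (axis i 1, 0)" for x y i
  proof -
    have "(\<lambda>z. per_ext \<psi>0 z y) = (\<lambda>x'. P (x',y))" by (simp add: fun_eq_iff pe)
    then show ?thesis using partial_x[OF PD[of "(x,y)"]] by (simp add: grad_x_def grad_comp)
  qed
  have FG: "\<epsilon> *\<^sub>R Feps \<epsilon> (Ge \<epsilon>) x y = grad_y (per_ext \<psi>0) x y + \<epsilon> *\<^sub>R grad_x (per_ext \<psi>0) x y"
    if e: "\<epsilon> > 0" for \<epsilon> x y
  proof (subst vec_eq_iff, intro allI)
    fix i
    have lin: "linear (D (x,y))" using PD has_derivative_linear by blast
    have sp: "(axis i 1 :: real^'n, (1/\<epsilon>) *\<^sub>R axis i 1 :: real^'n) = (axis i 1, 0) + (1/\<epsilon>) *\<^sub>R (0, axis i 1)"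
      by simp
    have "Feps \<epsilon> (Ge \<epsilon>) x y $ i = D (x,y) (axis i 1, (1/\<epsilon>) *\<^sub>R axis i 1)"
      by (simp add: Feps_def Ge_def)
    also have "\<dots> = D (x,y) (axis i 1, 0) + (1/\<epsilon>) * D (x,y) (0, axis i 1)"
      unfolding sp linear_add[OF lin] linear_cmul[OF lin] by simp
    finally have "Feps \<epsilon> (Ge \<epsilon>) x y $ i = D (x,y) (axis i 1, 0) + (1/\<epsilon>) * D (x,y) (0, axis i 1)" .
    then show "(\<epsilon> *\<^sub>R Feps \<epsilon> (Ge \<epsilon>) x y) $ i = (grad_y (per_ext \<psi>0) x y + \<epsilon> *\<^sub>R grad_x (per_ext \<psi>0) x y) $ i"
      using e by (simp add: gx gy field_simps)
  qed
  show ?thesis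
  proof (intro exI[of _ \<psi>e] exI[of _ Ge] conjI allI impI ballI)
    fix \<epsilon> :: real assume e: "\<epsilon> > 0"
    show "L2sharp_H1 \<Omega> (\<psi>e \<epsilon>)" unfolding L2sharp_H1_def using L1 L2 W by blast
    show "L2sharp_vec \<Omega> (Ge \<epsilon>)" by (rule L2)
    show "has_weak_grad_x \<Omega> (\<psi>e \<epsilon>) (Ge \<epsilon>)" by (rule W)
    show "Feps \<epsilon> (\<psi>e \<epsilon>) x y = per_ext \<psi>0 x y" for x y by (simp add: Feps_def \<psi>e_def)
    show "\<epsilon> *\<^sub>R Feps \<epsilon> (Ge \<epsilon>) x y = grad_y (per_ext \<psi>0) x y + \<epsilon> *\<^sub>R grad_x (per_ext \<psi>0) x y" for x y
      by (rule FG[OF e])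
  next
    show "strong_2s \<Omega> \<psi>e (per_ext \<psi>0)" by (rule S2_zero) (simp add: Feps_def \<psi>e_def)
    show "strong_2s_vec \<Omega> (\<lambda>\<epsilon> x y. \<epsilon> *\<^sub>R Ge \<epsilon> x y) (grad_y (per_ext \<psi>0))"
      unfolding strong_2s_vec_def
    proof
      fix i
      show "strong_2s \<Omega> (\<lambda>\<epsilon> x y. (\<epsilon> *\<^sub>R Ge \<epsilon> x y) $ i) (\<lambda>x y. grad_y (per_ext \<psi>0) x y $ i)"
      proof (rule S2_scale[where g="\<lambda>x y. grad_x (per_ext \<psi>0) x y $ i"])
        fix \<epsilon> :: real and x y :: "real^'n" assume e: "\<epsilon> > 0"
        have "Feps \<epsilon> (\<lambda>x y. (\<epsilon> *\<^sub>R Ge \<epsilon> x y) $ i) x y = (\<epsilon> *\<^sub>R Feps \<epsilon> (Ge \<epsilon>) x y) $ i"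
          by (simp add: Feps_def)
        then show "Feps \<epsilon> (\<lambda>x y. (\<epsilon> *\<^sub>R Ge \<epsilon> x y) $ i) x y - grad_y (per_ext \<psi>0) x y $ i =
             \<epsilon> * grad_x (per_ext \<psi>0) x y $ i"
          using FG[OF e, of x y] by simp
      qed
    qed
  qed
qed

theorem mainTheorem5:
  fixes \<Omega> :: "(real^'n) set"
  assumes "open \<Omega>"
  shows "(\<forall>\<phi>. test_fun \<Omega> \<phi> \<longrightarrow>
           (\<exists>\<phi>e Ge.
              (\<forall>\<epsilon>>0. L2sharp_H1 \<Omega> (\<phi>e \<epsilon>) \<and> L2sharp_vec \<Omega> (Ge \<epsilon>)
                 \<and> has_weak_grad_x \<Omega> (\<phi>e \<epsilon>) (Ge \<epsilon>)
                 \<and> (\<forall>x\<in>\<Omega>. \<forall>y. Feps \<epsilon> (\<phi>e \<epsilon>) x y = \<phi> x)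
                 \<and> (\<forall>x\<in>\<Omega>. \<forall>y. Feps \<epsilon> (Ge \<epsilon>) x y = grad \<phi> x))
            \<and> strong_2s \<Omega> \<phi>e (\<lambda>x y. \<phi> x)
            \<and> strong_2s_vec \<Omega> Ge (\<lambda>x y. grad \<phi> x)))
       \<and> (\<forall>\<psi>0. test_fun (\<Omega> \<times> box 0 One) \<psi>0 \<longrightarrow>
           (\<exists>\<psi>e Ge.
              (\<forall>\<epsilon>>0. L2sharp_H1 \<Omega> (\<psi>e \<epsilon>) \<and> L2sharp_vec \<Omega> (Ge \<epsilon>)
                 \<and> has_weak_grad_x \<Omega> (\<psi>e \<epsilon>) (Ge \<epsilon>)
                 \<and> (\<forall>x\<in>\<Omega>. \<forall>y. Feps \<epsilon> (\<psi>e \<epsilon>) x y = per_ext \<psi>0 x y)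
                 \<and> (\<forall>x\<in>\<Omega>. \<forall>y. \<epsilon> *\<^sub>R Feps \<epsilon> (Ge \<epsilon>) x y
                        = grad_y (per_ext \<psi>0) x y + \<epsilon> *\<^sub>R grad_x (per_ext \<psi>0) x y))
            \<and> strong_2s \<Omega> \<psi>e (per_ext \<psi>0)
            \<and> strong_2s_vec \<Omega> (\<lambda>\<epsilon> x y. \<epsilon> *\<^sub>R Ge \<epsilon> x y) (grad_y (per_ext \<psi>0))))"
    apply (intro conjI allI impI)
   apply (erule part1[OF assms])
  apply (erule part2[OF assms])
  done

end
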